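(* Let $\succeq$ and $\succeq'$ be unbounded moral-hazard preferences on $W$ with parsimonious representations $(c,u)$ and $(c',u')$ respectively. Then $\succeq$ is more optimistic than $\succeq'$ if and only if $u=u'$ and $c$ is up-shifted from $c'$.
   Context: $S=\{s_1<s_2<\dots<s_{|S|}\}$ is a finite totally ordered set of output levels, $\Delta(S)$ its simplex. $\Pi\subseteq\mathbb{R}$ convex; $\Delta(\Pi)$ finite-support distributions on $\Pi$; contracts $w:S\to\Delta(\Pi)$, set $W$; constant contracts identified with elements of $\Delta(\Pi)$; mixtures are probability mixtures ($(\alpha w+(1-\alpha)w')(s)=\alpha w(s)+(1-\alpha)w'(s)$). $u$ extends to $\Delta(\Pi)$ by expectation. Fixed reference prizes $\pi_0<\pi_1$; normalised means $\{u(\pi_0),u(\pi_1)\}=\{0,1\}$; grounded means infimum $0$. For $p,q\in\Delta(S)$, "$p$ FOSD $q$" means $\sum_{s\ge t}p(s)\ge\sum_{s\ge t}q(s)$ for all $t\in S$. A parsimonious representation of $\succeq$ is a pair $(c,u)$ with $c:\Delta(S)\to[0,\infty]$ grounded, convex, lower semi-continuous and $u:\Pi\to\mathbb{R}$ strictly increasing and normalised, such that $w\succeq w'$ iff $\max_{p}[-c(p)+\sum_s u(w(s))p(s)]\ge\max_p[-c(p)+\sum_s u(w'(s))p(s)]$. A moral-hazard preference is one admitting a parsimonious representation. $\succeq$ is unbounded iff there are $x\succ y$ in $\Delta(\Pi)$ such that for every $\alpha\in(0,1)$ there exist $z,z'\in\Delta(\Pi)$ with $y\succ\alpha z+(1-\alpha)x$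 and $\alpha z'+(1-\alpha)y\succ x$. For a relation $\succeq$ and $w,w'\in W$: $w$ is $\succeq$-steeper than $w'$ iff $\tfrac12w(s)+\tfrac12w'(s')\succeq\tfrac12w(s')+\tfrac12w'(s)$ (as constant contracts) for all $s\ge s'$ in $S$. $\succeq$ is more optimistic than $\succeq'$ iff whenever $w,w'\in W$ with $w$ $\succeq$-steeper than $w'$, $w\succeq'w'$ implies $w\succeq w'$ and $w\succ'w'$ implies $w\succ w'$. $c$ is up-shifted from $c'$ iff for any $p,p'\in\Delta(S)$ there exist $q,q'\in\Delta(S)$ such that $p$ FOSD $q'$, $q$ FOSD $p'$, $\tfrac12p+\tfrac12p'=\tfrac12q+\tfrac12q'$, and $c(q)+c'(q')\le c(p)+c'(p')$. *)

theory Defs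
  imports "HOL-Analysis.Analysis"
begin

(* Output levels: a finite linearly ordered type 's.  Delta(S) = probability vectors on 's. *)
definition simplexS :: "(real^'s::{finite,linorder}) set" where
  "simplexS = {p. (\<forall>s. 0 \<le> p $ s) \<and> (\<Sum>s\<in>UNIV. p $ s) = 1}"

(* Delta(Prz): finitely supported probability distributions on Prz, as mass functions *)
definition supp_d :: "(real \<Rightarrow> real) \<Rightarrow> real set" where
  "supp_d d = {x. d x \<noteq> 0}"

definition lotteries :: "real set \<Rightarrow> (real \<Rightarrow> real) set" where
  "lotteries Prz = {d. finite (supp_d d) \<and> supp_d d \<subseteq> Prz \<and> (\<forall>x. 0 \<le> d x)
                       \<and> (\<Sum>x\<in>supp_d d. d x) = 1}"

type_synonym 's contract = "'s \<Rightarrow> (real \<Rightarrow> real)"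

definition contracts :: "real set \<Rightarrow> ('s contract) set" where
  "contracts Prz = {w. \<forall>s. w s \<in> lotteries Prz}"

definition const_contract :: "(real \<Rightarrow> real) \<Rightarrow> 's contract" where
  "const_contract x = (\<lambda>s. x)"

definition mix :: "real \<Rightarrow> (real \<Rightarrow> real) \<Rightarrow> (real \<Rightarrow> real) \<Rightarrow> (real \<Rightarrow> real)" where
  "mix a x y = (\<lambda>t. a * x t + (1 - a) * y t)"

definition expu :: "(real \<Rightarrow> real) \<Rightarrow> (real \<Rightarrow> real) \<Rightarrow> real" where
  "expu u d = (\<Sum>x\<in>supp_d d. u x * d x)"

definition strict :: "('a \<Rightarrow> 'a \<Rightarrow> bool) \<Rightarrow> 'a \<Rightarrow> 'a \<Rightarrow> bool" where
  "strict R a b \<longleftrightarrow> R a b \<and> \<not> R b a"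

definition grounded :: "((real^'s::{finite,linorder}) \<Rightarrow> ereal) \<Rightarrow> bool" where
  "grounded c \<longleftrightarrow> (INF p\<in>simplexS. c p) = 0"

definition convex_cost :: "((real^'s::{finite,linorder}) \<Rightarrow> ereal) \<Rightarrow> bool" where
  "convex_cost c \<longleftrightarrow> (\<forall>p\<in>simplexS. \<forall>q\<in>simplexS. \<forall>t::real. 0 < t \<and> t < 1 \<longrightarrow>
      c (t *\<^sub>R p + (1 - t) *\<^sub>R q) \<le> ereal t * c p + ereal (1 - t) * c q)"

definition lsc_cost :: "((real^'s::{finite,linorder}) \<Rightarrow> ereal) \<Rightarrow> bool" where
  "lsc_cost c \<longleftrightarrow> (\<forall>p\<in>simplexS. \<forall>x::nat \<Rightarrow> real^'s::{finite,linorder}.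
      (\<forall>n. x n \<in> simplexS) \<and> x \<longlonglongrightarrow> p \<longrightarrow> c p \<le> liminf (\<lambda>n. c (x n)))"

definition val :: "((real^'s::{finite,linorder}) \<Rightarrow> ereal) \<Rightarrow> (real \<Rightarrow> real) \<Rightarrow> 's contract \<Rightarrow> ereal" where
  "val c u w = (SUP p\<in>simplexS. - c p + ereal (\<Sum>s\<in>UNIV. expu u (w s) * p $ s))"

definition parsimonious_rep ::
  "real set \<Rightarrow> real \<Rightarrow> real \<Rightarrow> ('s contract \<Rightarrow> 's contract \<Rightarrow> bool)
     \<Rightarrow> ((real^('s::{finite,linorder})) \<Rightarrow> ereal) \<Rightarrow> (real \<Rightarrow> real) \<Rightarrow> bool" where
  "parsimonious_rep Prz pi0 pi1 R c u \<longleftrightarrow>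
     (\<forall>p\<in>simplexS. 0 \<le> c p) \<and> grounded c \<and> convex_cost c \<and> lsc_cost c \<and>
     strict_mono_on Prz u \<and> {u pi0, u pi1} = {0, 1} \<and>
     (\<forall>w\<in>contracts Prz. \<forall>w'\<in>contracts Prz. R w w' \<longleftrightarrow> val c u w \<ge> val c u w')"

definition moral_hazard_pref ::
  "real set \<Rightarrow> real \<Rightarrow> real \<Rightarrow> (('s::{finite,linorder}) contract \<Rightarrow> 's contract \<Rightarrow> bool) \<Rightarrow> bool" where
  "moral_hazard_pref Prz pi0 pi1 R \<longleftrightarrow>
     (\<exists>c u. parsimonious_rep Prz pi0 pi1 R (c :: (real^('s::{finite,linorder})) \<Rightarrow> ereal) u)"

definition unbounded_pref :: "real set \<Rightarrow> ('s contract \<Rightarrow> 's contract \<Rightarrow> bool) \<Rightarrow> bool" where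
  "unbounded_pref Prz R \<longleftrightarrow>
    (\<exists>x\<in>lotteries Prz. \<exists>y\<in>lotteries Prz.
       strict R (const_contract x) (const_contract y) \<and>
       (\<forall>a. 0 < a \<and> a < 1 \<longrightarrow>
          (\<exists>z\<in>lotteries Prz. \<exists>z'\<in>lotteries Prz.
             strict R (const_contract y) (const_contract (mix a z x)) \<and>
             strict R (const_contract (mix a z' y)) (const_contract x))))"

definition steeper ::
  "(('s::{finite,linorder}) contract \<Rightarrow> 's contract \<Rightarrow> bool) \<Rightarrow> 's contract \<Rightarrow> 's contract \<Rightarrow> bool" where
  "steeper R w w' \<longleftrightarrow> (\<forall>s s'. s' \<le> s \<longrightarrow>
      R (const_contract (mix (1/2) (w s) (w' s'))) (const_contract (mix (1/2) (w s') (w' s))))"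

definition more_optimistic ::
  "real set \<Rightarrow> (('s::{finite,linorder}) contract \<Rightarrow> 's contract \<Rightarrow> bool) \<Rightarrow> ('s contract \<Rightarrow> 's contract \<Rightarrow> bool) \<Rightarrow> bool" where
  "more_optimistic Prz R R' \<longleftrightarrow> (\<forall>w\<in>contracts Prz. \<forall>w'\<in>contracts Prz. steeper R w w' \<longrightarrow>
      (R' w w' \<longrightarrow> R w w') \<and> (strict R' w w' \<longrightarrow> strict R w w'))"

definition fosd :: "(real^'s::{finite,linorder}) \<Rightarrow> real^('s::{finite,linorder}) \<Rightarrow> bool" where
  "fosd p q \<longleftrightarrow> (\<forall>t. (\<Sum>s\<in>{s. t \<le> s}. p $ s) \<ge> (\<Sum>s\<in>{s. t \<le> s}. q $ s))"

definition up_shifted :: "((real^'s::{finite,linorder}) \<Rightarrow> ereal) \<Rightarrow> ((real^('s::{finite,linorder})) \<Rightarrow> ereal) \<Rightarrow> bool" where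
  "up_shifted c c' \<longleftrightarrow> (\<forall>p\<in>simplexS. \<forall>p'\<in>simplexS. \<exists>q\<in>simplexS. \<exists>q'\<in>simplexS.
      fosd p q' \<and> fosd q p' \<and>
      (1/2) *\<^sub>R p + (1/2) *\<^sub>R p' = (1/2) *\<^sub>R q + (1/2) *\<^sub>R q' \<and>
      c q + c' q' \<le> c p + c' p')"

end

theory Submission
  imports Defs
begin


section \<open>Lotteries\<close>

definition dlt :: "real \<Rightarrow> real \<Rightarrow> real" where "dlt x = (\<lambda>t. if t = x then 1 else 0)"

lemma supp_dlt: "supp_d (dlt x) = {x}" by (auto simp: supp_d_def dlt_def)

lemma dlt_lottery: "x \<in> Prz \<Longrightarrow> dlt x \<in> lotteries Prz"
  by (auto simp: lotteries_def supp_dlt) (auto simp: dlt_def)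

lemma expu_dlt: "expu u (dlt x) = u x"
  unfolding expu_def supp_dlt by (simp add: dlt_def)

lemma expu_superset:
  assumes "finite T" "supp_d d \<subseteq> T"
  shows "expu u d = (\<Sum>x\<in>T. u x * d x)"
  unfolding expu_def using assms
  by (intro sum.mono_neutral_left) (auto simp: supp_d_def)

lemma sum_superset:
  assumes "finite T" "supp_d d \<subseteq> T"
  shows "(\<Sum>x\<in>supp_d d. d x) = (\<Sum>x\<in>T. d x)"
  using assms by (intro sum.mono_neutral_left) (auto simp: supp_d_def)

lemma supp_mix: "supp_d (mix a x y) \<subseteq> supp_d x \<union> supp_d y"
  by (auto simp: supp_d_def mix_def)

lemma mix_lottery:
  assumes "x \<in> lotteries Prz" "y \<in> lotteries Prz" "0 \<le> a" "a \<le> 1"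
  shows "mix a x y \<in> lotteries Prz"
proof -
  have f: "finite (supp_d x \<union> supp_d y)" using assms by (auto simp: lotteries_def)
  have s: "supp_d (mix a x y) \<subseteq> Prz" using supp_mix[of a x y] assms by (auto simp: lotteries_def)
  have nn: "\<forall>t. 0 \<le> mix a x y t" using assms by (auto simp: lotteries_def mix_def)
  have "(\<Sum>t\<in>supp_d (mix a x y). mix a x y t) = (\<Sum>t\<in>supp_d x \<union> supp_d y. mix a x y t)"
    by (rule sum_superset[OF f supp_mix])
  also have "\<dots> = a * (\<Sum>t\<in>supp_d x \<union> supp_d y. x t) + (1 - a) * (\<Sum>t\<in>supp_d x \<union> supp_d y. y t)"
    by (simp add: mix_def sum.distrib sum_distrib_left)
  also have "\<dots> = a * 1 + (1 - a) * 1"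
    using sum_superset[OF f, of x] sum_superset[OF f, of y] assms by (auto simp: lotteries_def)
  finally show ?thesis using f s nn supp_mix[of a x y] by (auto simp: lotteries_def intro: finite_subset)
qed

lemma expu_mix:
  assumes "x \<in> lotteries Prz" "y \<in> lotteries Prz"
  shows "expu u (mix a x y) = a * expu u x + (1 - a) * expu u y"
proof -
  have f: "finite (supp_d x \<union> supp_d y)" using assms by (auto simp: lotteries_def)
  have "expu u (mix a x y) = (\<Sum>t\<in>supp_d x \<union> supp_d y. u t * mix a x y t)"
    by (rule expu_superset[OF f supp_mix])
  also have "\<dots> = a * (\<Sum>t\<in>supp_d x \<union> supp_d y. u t * x t) + (1 - a) * (\<Sum>t\<in>supp_d x \<union> supp_d y. u t * y t)"
    unfolding mix_def sum_distrib_left sum.distrib[symmetric] by (rule sum.cong) (auto simp: algebra_simps)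
  also have "\<dots> = a * expu u x + (1 - a) * expu u y"
    using expu_superset[OF f, of x u] expu_superset[OF f, of y u] by auto
  finally show ?thesis .
qed

lemma expu_cong:
  assumes "x \<in> lotteries Prz" "\<forall>t\<in>Prz. u t = u' t"
  shows "expu u x = expu u' x"
  using assms unfolding expu_def lotteries_def by (intro sum.cong) auto

section \<open>Values\<close>

definition V :: "((real^'s::{finite,linorder}) \<Rightarrow> ereal) \<Rightarrow> ('s \<Rightarrow> real) \<Rightarrow> ereal" where
  "V c A = (SUP p\<in>simplexS. - c p + ereal (\<Sum>s\<in>UNIV. A s * p $ s))"

definition W :: "((real^'s::{finite,linorder}) \<Rightarrow> ereal) \<Rightarrow> ('s \<Rightarrow> real) \<Rightarrow> real" where
  "W c A = real_of_ereal (V c A)"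

lemma val_V: "val c u w = V c (\<lambda>s. expu u (w s))"
  by (simp add: val_def V_def)

definition okc :: "((real^'s::{finite,linorder}) \<Rightarrow> ereal) \<Rightarrow> bool" where
  "okc c \<longleftrightarrow> (\<forall>p\<in>simplexS. 0 \<le> c p) \<and> grounded c"

lemma simplex_le1: "p \<in> simplexS \<Longrightarrow> p $ s \<le> 1"
proof -
  assume p: "p \<in> simplexS"
  have "p $ s \<le> (\<Sum>t\<in>UNIV. p $ t)"
    using p by (intro member_le_sum) (auto simp: simplexS_def)
  thus ?thesis using p by (simp add: simplexS_def)
qed

lemma dot_bound: "p \<in> simplexS \<Longrightarrow> (\<Sum>s\<in>UNIV. A s * p $ s) \<le> (\<Sum>s\<in>UNIV. \<bar>A s\<bar>)"
proof -
  assume p: "p \<in> simplexS"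
  show ?thesis
  proof (intro sum_mono)
    fix s
    have "A s * p $ s \<le> \<bar>A s\<bar> * p $ s" using p by (intro mult_right_mono) (auto simp: simplexS_def)
    also have "\<dots> \<le> \<bar>A s\<bar> * 1" using p simplex_le1[OF p, of s] by (intro mult_left_mono) auto
    finally show "A s * p $ s \<le> \<bar>A s\<bar>" by simp
  qed
qed

lemma grounded_small:
  fixes c :: "(real^'s::{finite,linorder}) \<Rightarrow> ereal"
  assumes "grounded c" "0 < (e::real)"
  shows "\<exists>p\<in>simplexS. c p < ereal e"
proof -
  have "(INF p\<in>simplexS. c p) < ereal e" using assms by (simp add: grounded_def)
  thus ?thesis by (simp add: INF_less_iff)
qed

lemma V_finite:
  fixes c :: "(real^'s::{finite,linorder}) \<Rightarrow> ereal"
  assumes "okc c"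
  shows "V c A = ereal (W c A)"
proof -
  obtain p0 where p0: "p0 \<in> simplexS" "c p0 < ereal 1"
    using grounded_small[of c 1] assms by (auto simp: okc_def)
  have c0: "0 \<le> c p0" using assms p0 by (auto simp: okc_def)
  have "- c p0 + ereal (\<Sum>s\<in>UNIV. A s * p0 $ s) \<le> V c A"
    unfolding V_def using p0 by (intro SUP_upper) auto
  moreover have "- c p0 + ereal (\<Sum>s\<in>UNIV. A s * p0 $ s) \<noteq> -\<infinity>"
    using p0 c0 by (cases "c p0") auto
  ultimately have lo: "V c A \<noteq> -\<infinity>" by auto
  have "V c A \<le> ereal (\<Sum>s\<in>UNIV. \<bar>A s\<bar>)"
    unfolding V_def
  proof (intro SUP_least)
    fix p :: "real^'s::{finite,linorder}" assume p: "p \<in> simplexS"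
    have "0 \<le> c p" using p assms by (auto simp: okc_def)
    hence "- c p \<le> 0" by (simp add: ereal_uminus_le_reorder)
    hence "- c p + ereal (\<Sum>s\<in>UNIV. A s * p $ s) \<le> 0 + ereal (\<Sum>s\<in>UNIV. A s * p $ s)"
      by (intro add_right_mono)
    also have "\<dots> \<le> ereal (\<Sum>s\<in>UNIV. \<bar>A s\<bar>)" using dot_bound[OF p, of A] by simp
    finally show "- c p + ereal (\<Sum>s\<in>UNIV. A s * p $ s) \<le> ereal (\<Sum>s\<in>UNIV. \<bar>A s\<bar>)" .
  qed
  hence "V c A \<noteq> \<infinity>" by auto
  with lo show ?thesis unfolding W_def by (cases "V c A") auto
qed

lemma W_ge:
  fixes c :: "(real^'s::{finite,linorder}) \<Rightarrow> ereal"
  assumes "okc c" "p \<in> simplexS" "c p \<noteq> \<infinity>"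
  shows "(\<Sum>s\<in>UNIV. A s * p $ s) - real_of_ereal (c p) \<le> W c A"
proof -
  have "- c p + ereal (\<Sum>s\<in>UNIV. A s * p $ s) \<le> V c A"
    unfolding V_def using assms by (intro SUP_upper) auto
  moreover have "0 \<le> c p" using assms by (auto simp: okc_def)
  ultimately show ?thesis using V_finite[OF assms(1), of A] assms(3)
    by (cases "c p") auto
qed

lemma W_le:
  fixes c :: "(real^'s::{finite,linorder}) \<Rightarrow> ereal"
  assumes "okc c" "\<And>p. p \<in> simplexS \<Longrightarrow> c p \<noteq> \<infinity> \<Longrightarrow> (\<Sum>s\<in>UNIV. A s * p $ s) - real_of_ereal (c p) \<le> z"
  shows "W c A \<le> z"
proof -
  have "V c A \<le> ereal z"
    unfolding V_def
  proof (intro SUP_least)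
    fix p :: "real^'s::{finite,linorder}" assume p: "p \<in> simplexS"
    have c0: "0 \<le> c p" using p assms by (auto simp: okc_def)
    show "- c p + ereal (\<Sum>s\<in>UNIV. A s * p $ s) \<le> ereal z"
    proof (cases "c p = \<infinity>")
      case True thus ?thesis by simp
    next
      case False
      thus ?thesis using assms(2)[OF p False] c0 by (cases "c p") auto
    qed
  qed
  thus ?thesis using V_finite[OF assms(1), of A] by simp
qed

lemma W_approx:
  fixes c :: "(real^'s::{finite,linorder}) \<Rightarrow> ereal"
  assumes "okc c" "0 < e"
  shows "\<exists>p\<in>simplexS. c p \<noteq> \<infinity> \<and> W c A - e < (\<Sum>s\<in>UNIV. A s * p $ s) - real_of_ereal (c p)"
proof (rule ccontr)
  assume "\<not> ?thesis"
  hence "\<And>p. p \<in> simplexS \<Longrightarrow> c p \<noteq> \<infinity> \<Longrightarrow> (\<Sum>s\<in>UNIV. A s * p $ s) - real_of_ereal (c p) \<le> W c A - e"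
    by force
  hence "W c A \<le> W c A - e" by (rule W_le[OF assms(1)])
  thus False using assms by simp
qed

lemma simplex_sum: "p \<in> simplexS \<Longrightarrow> (\<Sum>s\<in>UNIV. p $ s) = 1" by (simp add: simplexS_def)

lemma dot_shift: "p \<in> simplexS \<Longrightarrow> (\<Sum>s\<in>UNIV. (A s + k) * p $ s) = (\<Sum>s\<in>UNIV. A s * p $ s) + k"
  by (simp add: distrib_right sum.distrib simplex_sum flip: sum_distrib_left)

lemma W_shift:
  fixes c :: "(real^'s::{finite,linorder}) \<Rightarrow> ereal"
  assumes "okc c"
  shows "W c (\<lambda>s. A s + k) = W c A + k"
proof (rule antisym)
  show "W c (\<lambda>s. A s + k) \<le> W c A + k"
    by (rule W_le[OF assms]) (use W_ge[OF assms] dot_shift in force)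
  have "W c A \<le> W c (\<lambda>s. A s + k) - k"
    by (rule W_le[OF assms]) (use W_ge[OF assms, of _ "\<lambda>s. A s + k"] dot_shift in force)
  thus "W c A + k \<le> W c (\<lambda>s. A s + k)" by simp
qed

lemma W_const:
  fixes c :: "(real^'s::{finite,linorder}) \<Rightarrow> ereal"
  assumes "okc c"
  shows "W c (\<lambda>s. k) = k"
proof (rule antisym)
  show "W c (\<lambda>s. k) \<le> k"
  proof (rule W_le[OF assms])
    fix p :: "real^'s::{finite,linorder}" assume p: "p \<in> simplexS" "c p \<noteq> \<infinity>"
    have "0 \<le> c p" using p assms by (auto simp: okc_def)
    hence "0 \<le> real_of_ereal (c p)" by (simp add: real_of_ereal_pos)
    thus "(\<Sum>s\<in>UNIV. k * p $ s) - real_of_ereal (c p) \<le> k"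
      using p by (simp add: simplex_sum flip: sum_distrib_left)
  qed
  show "k \<le> W c (\<lambda>s. k)"
  proof (rule field_le_epsilon)
    fix e :: real assume e: "0 < e"
    obtain p where p: "p \<in> simplexS" "c p < ereal e"
      using grounded_small[of c e] assms e by (auto simp: okc_def)
    have c0: "0 \<le> c p" using p assms by (auto simp: okc_def)
    have "(\<Sum>s\<in>UNIV. k * p $ s) - real_of_ereal (c p) \<le> W c (\<lambda>s. k)"
      using p by (intro W_ge[OF assms]) auto
    moreover have "real_of_ereal (c p) < e" using p c0 by (cases "c p") auto
    ultimately show "k \<le> W c (\<lambda>s. k) + e" using p by (simp add: simplex_sum flip: sum_distrib_left)
  qed
qed



lemma abel_pos:
  fixes e x :: "'a::linorder \<Rightarrow> real"
  assumes "finite A" "\<forall>s\<in>A. \<forall>s'\<in>A. s' \<le> s \<longrightarrow> e s' \<le> e s" "\<forall>s\<in>A. 0 \<le> e s"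
    "\<forall>t\<in>A. 0 \<le> (\<Sum>s\<in>{s\<in>A. t \<le> s}. x s)"
  shows "0 \<le> (\<Sum>s\<in>A. e s * x s)"
  using assms
proof (induction A arbitrary: e rule: finite_linorder_min_induct)
  case empty
  then show ?case by simp
next
  case (insert b A)
  let ?e = "\<lambda>s. e s - e b"
  have bA: "b \<notin> A" using insert by auto
  have ih: "0 \<le> (\<Sum>s\<in>A. ?e s * x s)"
  proof (rule insert.IH)
    show "\<forall>s\<in>A. \<forall>s'\<in>A. s' \<le> s \<longrightarrow> ?e s' \<le> ?e s" using insert.prems by auto
    show "\<forall>s\<in>A. 0 \<le> ?e s" using insert.prems insert.hyps by (auto intro: less_imp_le)
    show "\<forall>t\<in>A. 0 \<le> (\<Sum>s\<in>{s\<in>A. t \<le> s}. x s)"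
    proof
      fix t assume t: "t \<in> A"
      have "{s\<in>insert b A. t \<le> s} = {s\<in>A. t \<le> s}" using t insert.hyps by auto
      thus "0 \<le> (\<Sum>s\<in>{s\<in>A. t \<le> s}. x s)" using insert.prems(3) t by auto
    qed
  qed
  have "{s\<in>insert b A. b \<le> s} = insert b A" using insert.hyps by auto
  hence tb: "0 \<le> (\<Sum>s\<in>insert b A. x s)" using insert.prems(3) by (metis insertI1)
  have "(\<Sum>s\<in>insert b A. e s * x s) = e b * (\<Sum>s\<in>insert b A. x s) + (\<Sum>s\<in>A. ?e s * x s)"
    using insert.hyps bA by (simp add: sum_distrib_left algebra_simps sum_subtractf sum.distrib)
  also have "\<dots> \<ge> 0" using ih tb insert.prems(2) by simp
  finally show ?case .
qed

lemma fosd_dot: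
  fixes d :: "'s::{finite,linorder} \<Rightarrow> real"
  assumes "p \<in> simplexS" "q \<in> simplexS" "fosd p q" "\<forall>s s'. s' \<le> s \<longrightarrow> d s' \<le> d s"
  shows "(\<Sum>s\<in>UNIV. d s * q $ s) \<le> (\<Sum>s\<in>UNIV. d s * p $ s)"
proof -
  define m where "m = Min (range d)"
  have m: "\<And>s. m \<le> d s" unfolding m_def by (intro Min_le) auto
  have "0 \<le> (\<Sum>s\<in>UNIV. (d s - m) * (p $ s - q $ s))"
  proof (rule abel_pos)
    show "\<forall>t\<in>UNIV. 0 \<le> (\<Sum>s\<in>{s \<in> UNIV. t \<le> s}. p $ s - q $ s)"
      using assms(3) by (simp add: fosd_def sum_subtractf)
  qed (use assms m in auto)
  also have "(\<Sum>s\<in>UNIV. (d s - m) * (p $ s - q $ s))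
     = (\<Sum>s\<in>UNIV. d s * p $ s - d s * q $ s - m * (p $ s - q $ s))"
    by (rule sum.cong) (auto simp: algebra_simps)
  also have "\<dots> = (\<Sum>s\<in>UNIV. d s * p $ s) - (\<Sum>s\<in>UNIV. d s * q $ s) - m * ((\<Sum>s\<in>UNIV. p $ s) - (\<Sum>s\<in>UNIV. q $ s))"
    by (simp only: sum_subtractf) (simp add: sum_subtractf flip: sum_distrib_left)
  also have "(\<Sum>s\<in>UNIV. p $ s) - (\<Sum>s\<in>UNIV. q $ s) = 0" using assms by (simp add: simplex_sum)
  finally show ?thesis by simp
qed

lemma tail_swap:
  fixes \<mu> x :: "'s::{finite,linorder} \<Rightarrow> real"
  shows "(\<Sum>t\<in>UNIV. \<mu> t * (\<Sum>s\<in>{s. t \<le> s}. x s)) = (\<Sum>s\<in>UNIV. (\<Sum>t\<in>{t. t \<le> s}. \<mu> t) * x s)"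
proof -
  have "(\<Sum>t\<in>UNIV. \<mu> t * (\<Sum>s\<in>{s. t \<le> s}. x s)) = (\<Sum>t\<in>UNIV. \<Sum>s\<in>UNIV. if t \<le> s then \<mu> t * x s else 0)"
    by (simp add: sum_distrib_left sum.If_cases Int_def)
  also have "\<dots> = (\<Sum>s\<in>UNIV. \<Sum>t\<in>UNIV. if t \<le> s then \<mu> t * x s else 0)" by (rule sum.swap)
  also have "\<dots> = (\<Sum>s\<in>UNIV. (\<Sum>t\<in>{t. t \<le> s}. \<mu> t) * x s)"
    by (simp add: sum_distrib_right sum.If_cases Int_def)
  finally show ?thesis .
qed

section \<open>Representation consequences\<close>

lemma rep_okc: "parsimonious_rep Prz pi0 pi1 R c u \<Longrightarrow> okc c"
  by (simp add: parsimonious_rep_def okc_def)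

lemma const_contract_in: "x \<in> lotteries Prz \<Longrightarrow> const_contract x \<in> contracts Prz"
  by (simp add: contracts_def const_contract_def)

lemma val_W: "okc c \<Longrightarrow> val c u w = ereal (W c (\<lambda>s. expu u (w s)))"
  by (simp add: val_V V_finite)

lemma R_iff:
  assumes "parsimonious_rep Prz pi0 pi1 R c u" "w \<in> contracts Prz" "w' \<in> contracts Prz"
  shows "R w w' \<longleftrightarrow> W c (\<lambda>s. expu u (w' s)) \<le> W c (\<lambda>s. expu u (w s))"
  using assms val_W[OF rep_okc[OF assms(1)]] unfolding parsimonious_rep_def by auto

lemma strictR_iff:
  assumes "parsimonious_rep Prz pi0 pi1 R c u" "w \<in> contracts Prz" "w' \<in> contracts Prz"
  shows "strict R w w' \<longleftrightarrow> W c (\<lambda>s. expu u (w' s)) < W c (\<lambda>s. expu u (w s))"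
  using R_iff[OF assms] R_iff[OF assms(1,3,2)] unfolding strict_def by auto

lemma R_const_iff:
  assumes "parsimonious_rep Prz pi0 pi1 R c u" "x \<in> lotteries Prz" "y \<in> lotteries Prz"
  shows "R (const_contract x) (const_contract y) \<longleftrightarrow> expu u y \<le> expu u x"
  using R_iff[OF assms(1) const_contract_in[OF assms(2)] const_contract_in[OF assms(3)]]
    W_const[OF rep_okc[OF assms(1)]] by (simp add: const_contract_def)

lemma strictR_const_iff:
  assumes "parsimonious_rep Prz pi0 pi1 R c u" "x \<in> lotteries Prz" "y \<in> lotteries Prz"
  shows "strict R (const_contract x) (const_contract y) \<longleftrightarrow> expu u y < expu u x"
  using R_const_iff[OF assms] R_const_iff[OF assms(1,3,2)] unfolding strict_def by auto

lemma realize_scalar: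
  assumes rep: "parsimonious_rep Prz pi0 pi1 R c u" and unb: "unbounded_pref Prz R"
  shows "\<exists>d\<in>lotteries Prz. expu u d = t"
proof -
  obtain x y where xy: "x \<in> lotteries Prz" "y \<in> lotteries Prz"
    "strict R (const_contract x) (const_contract y)"
    and mixes: "\<And>a. 0 < a \<Longrightarrow> a < 1 \<Longrightarrow> (\<exists>z\<in>lotteries Prz. \<exists>z'\<in>lotteries Prz.
             strict R (const_contract y) (const_contract (mix a z x)) \<and>
             strict R (const_contract (mix a z' y)) (const_contract x))"
    using unb unfolding unbounded_pref_def by blast
  define ex ey where "ex = expu u x" and "ey = expu u y"
  have exy: "ey < ex" using strictR_const_iff[OF rep xy(1,2)] xy(3) by (simp add: ex_def ey_def)
  define D where "D = ex - ey"
  have D: "0 < D" using exy by (simp add: D_def)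
  have low: "\<exists>z\<in>lotteries Prz. expu u z \<le> t"
  proof -
    define a where "a = D / (D + \<bar>ex - t\<bar> + 1)"
    have a: "0 < a" "a < 1" using D by (auto simp: a_def field_simps)
    have aD: "a * (D + \<bar>ex - t\<bar> + 1) = D" using D by (simp add: a_def)
    obtain z where z: "z \<in> lotteries Prz" "strict R (const_contract y) (const_contract (mix a z x))"
      using mixes[OF a] by blast
    have "mix a z x \<in> lotteries Prz" using mix_lottery[OF z(1) xy(1)] a by auto
    hence "expu u (mix a z x) < ey" using strictR_const_iff[OF rep xy(2)] z(2) ey_def by auto
    hence "a * expu u z + (1 - a) * ex < ey" using expu_mix[OF z(1) xy(1)] ex_def by simp
    hence "a * expu u z < a * (ex - (D + \<bar>ex - t\<bar> + 1))" using aD by (simp add: D_def algebra_simps)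
    hence "expu u z < ex - (D + \<bar>ex - t\<bar> + 1)" using a by simp
    hence "expu u z \<le> t" using abs_ge_self[of "ex - t"] D by linarith
    thus ?thesis using z(1) by (intro bexI[of _ z]) auto
  qed
  have high: "\<exists>z\<in>lotteries Prz. t \<le> expu u z"
  proof -
    define a where "a = D / (D + \<bar>t - ey\<bar> + 1)"
    have a: "0 < a" "a < 1" using D by (auto simp: a_def field_simps)
    have aD: "a * (D + \<bar>t - ey\<bar> + 1) = D" using D by (simp add: a_def)
    obtain z where z: "z \<in> lotteries Prz" "strict R (const_contract (mix a z y)) (const_contract x)"
      using mixes[OF a] by blast
    have "mix a z y \<in> lotteries Prz" using mix_lottery[OF z(1) xy(2)] a by auto
    hence "ex < expu u (mix a z y)" using strictR_const_iff[OF rep _ xy(1)] z(2) ex_def by auto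
    hence "ex < a * expu u z + (1 - a) * ey" using expu_mix[OF z(1) xy(2)] ey_def by simp
    hence "a * (ey + (D + \<bar>t - ey\<bar> + 1)) < a * expu u z" using aD by (simp add: D_def algebra_simps)
    hence "ey + (D + \<bar>t - ey\<bar> + 1) < expu u z" using a by simp
    hence "t \<le> expu u z" using abs_ge_self[of "t - ey"] D by linarith
    thus ?thesis using z(1) by (intro bexI[of _ z]) auto
  qed
  obtain z z' where z: "z \<in> lotteries Prz" "expu u z \<le> t" and z': "z' \<in> lotteries Prz" "t \<le> expu u z'"
    using low high by blast
  show ?thesis
  proof (cases "expu u z = expu u z'")
    case True thus ?thesis using z z' by (intro bexI[of _ z]) auto
  next
    case False
    hence lt: "expu u z < expu u z'" using z z' by simp
    define l where "l = (expu u z' - t) / (expu u z' - expu u z)"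
    have l: "0 \<le> l" "l \<le> 1" using lt z z' by (auto simp: l_def field_simps)
    have "expu u (mix l z z') = l * expu u z + (1 - l) * expu u z'" by (rule expu_mix[OF z(1) z'(1)])
    also have "\<dots> = expu u z' - l * (expu u z' - expu u z)" by (simp add: algebra_simps)
    also have "\<dots> = t" using lt by (simp add: l_def)
    finally show ?thesis using mix_lottery[OF z(1) z'(1) l] by blast
  qed
qed

lemma realize_vec:
  assumes rep: "parsimonious_rep Prz pi0 pi1 R c u" and unb: "unbounded_pref Prz R"
  shows "\<exists>w\<in>contracts Prz. \<forall>s. expu u (w s) = A s"
proof -
  have "\<forall>s. \<exists>d. d \<in> lotteries Prz \<and> expu u d = A s"
    using realize_scalar[OF rep unb] by blast
  then obtain w where "\<forall>s. w s \<in> lotteries Prz \<and> expu u (w s) = A s" by metis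
  thus ?thesis by (auto simp: contracts_def)
qed



lemma compact_simplex: "compact (simplexS :: (real^'s::{finite,linorder}) set)"
unfolding compact_eq_bounded_closed
proof (rule conjI[rotated])
  have "simplexS = {p::real^'s::{finite,linorder}. \<forall>s. 0 \<le> p $ s} \<inter> {p. (\<Sum>s\<in>UNIV. p $ s) = 1}"
    by (auto simp: simplexS_def)
  moreover have "closed {p::real^'s::{finite,linorder}. \<forall>s. 0 \<le> p $ s}"
    by (intro closed_Collect_all closed_Collect_le continuous_intros)
  moreover have "closed {p::real^'s::{finite,linorder}. (\<Sum>s\<in>UNIV. p $ s) = 1}"
    by (intro closed_Collect_eq continuous_intros)
  ultimately show "closed (simplexS :: (real^'s::{finite,linorder}) set)" by (metis closed_Int)
  show "bounded (simplexS :: (real^'s::{finite,linorder}) set)"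
    unfolding bounded_iff
  proof (intro exI ballI)
    fix p :: "real^'s::{finite,linorder}" assume p: "p \<in> simplexS"
    have "norm p \<le> (\<Sum>s\<in>UNIV. \<bar>p $ s\<bar>)" by (rule norm_le_l1_cart)
    also have "\<dots> = 1" using p by (simp add: simplexS_def)
    finally show "norm p \<le> 1" .
  qed
qed

lemma simplex_convex:
  assumes "p \<in> simplexS" "q \<in> simplexS" "0 \<le> u" "u \<le> 1"
  shows "u *\<^sub>R p + (1 - u) *\<^sub>R q \<in> simplexS"
  using assms by (auto simp: simplexS_def sum.distrib simp flip: sum_distrib_left)

lemma cost_conv:
  fixes c :: "(real^'s::{finite,linorder}) \<Rightarrow> ereal"
  assumes cv: "convex_cost c" and nn: "\<forall>q\<in>simplexS. 0 \<le> c q"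
    and q: "q1 \<in> simplexS" "q2 \<in> simplexS" "c q1 \<noteq> \<infinity>" "c q2 \<noteq> \<infinity>" and u: "0 \<le> u" "u \<le> 1"
  shows "c (u *\<^sub>R q1 + (1 - u) *\<^sub>R q2) \<noteq> \<infinity> \<and>
     real_of_ereal (c (u *\<^sub>R q1 + (1 - u) *\<^sub>R q2)) \<le> u * real_of_ereal (c q1) + (1 - u) * real_of_ereal (c q2)"
proof (cases "u = 0 \<or> u = 1")
  case True thus ?thesis using q by auto
next
  case False
  hence u': "0 < u" "u < 1" using u by auto
  have mem: "u *\<^sub>R q1 + (1 - u) *\<^sub>R q2 \<in> simplexS" using simplex_convex q u by blast
  have n1: "0 \<le> c q1" "0 \<le> c q2" using nn q by auto
  obtain a1 a2 where a: "c q1 = ereal a1" "c q2 = ereal a2" using q n1 by (cases "c q1"; cases "c q2") auto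
  have le: "c (u *\<^sub>R q1 + (1 - u) *\<^sub>R q2) \<le> ereal (u * a1 + (1 - u) * a2)"
    using cv q u' a unfolding convex_cost_def by force
  have "0 \<le> c (u *\<^sub>R q1 + (1 - u) *\<^sub>R q2)" using nn mem by auto
  thus ?thesis using le a by (cases "c (u *\<^sub>R q1 + (1 - u) *\<^sub>R q2)") auto
qed



definition Tv :: "(real^'s::{finite,linorder}) \<Rightarrow> real^'s::{finite,linorder} \<Rightarrow> real^'s::{finite,linorder}" where
  "Tv p q' = (\<chi> t. \<Sum>s\<in>{s. t \<le> s}. p $ s - q' $ s)"

lemma Tv_affine:
  "Tv p (u *\<^sub>R q1 + (1 - u) *\<^sub>R q2) = u *\<^sub>R Tv p q1 + (1 - u) *\<^sub>R Tv p q2"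
  by (simp add: Tv_def vec_eq_iff sum_distrib_left sum.distrib[symmetric] algebra_simps)

definition Eset :: "((real^'s::{finite,linorder}) \<Rightarrow> ereal) \<Rightarrow> ((real^'s::{finite,linorder}) \<Rightarrow> ereal) \<Rightarrow> real^'s::{finite,linorder} \<Rightarrow> real^'s::{finite,linorder} \<Rightarrow> real
   \<Rightarrow> (((real^'s::{finite,linorder}) \<times> (real^'s::{finite,linorder})) \<times> real) set" where
  "Eset c c' p p' K = {((q + q' - p - p', Tv p q' - y), r) | q q' y r. q \<in> simplexS \<and> q' \<in> simplexS \<and>
      (\<forall>t. 0 \<le> y $ t) \<and> c q \<noteq> \<infinity> \<and> c' q' \<noteq> \<infinity> \<and> real_of_ereal (c q) + real_of_ereal (c' q') - K \<le> r}"

lemma Eset_convex: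
  fixes c c' :: "(real^'s::{finite,linorder}) \<Rightarrow> ereal"
  assumes cv: "convex_cost c" "convex_cost c'" and nn: "\<forall>q\<in>simplexS. 0 \<le> c q" "\<forall>q\<in>simplexS. 0 \<le> c' q"
  shows "convex (Eset c c' p p' K)"
  unfolding convex_alt
proof (intro ballI allI impI)
  fix z x and u :: real
  assume z: "z \<in> Eset c c' p p' K" and x: "x \<in> Eset c c' p p' K" and u: "0 \<le> u \<and> u \<le> 1"
  obtain q1 q1' y1 r1 where 1: "x = ((q1 + q1' - p - p', Tv p q1' - y1), r1)" "q1 \<in> simplexS" "q1' \<in> simplexS"
    "\<forall>t. 0 \<le> y1 $ t" "c q1 \<noteq> \<infinity>" "c' q1' \<noteq> \<infinity>" "real_of_ereal (c q1) + real_of_ereal (c' q1') - K \<le> r1"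
    using x unfolding Eset_def by blast
  obtain q2 q2' y2 r2 where 2: "z = ((q2 + q2' - p - p', Tv p q2' - y2), r2)" "q2 \<in> simplexS" "q2' \<in> simplexS"
    "\<forall>t. 0 \<le> y2 $ t" "c q2 \<noteq> \<infinity>" "c' q2' \<noteq> \<infinity>" "real_of_ereal (c q2) + real_of_ereal (c' q2') - K \<le> r2"
    using z unfolding Eset_def by blast
  define q where "q = u *\<^sub>R q1 + (1 - u) *\<^sub>R q2"
  define q' where "q' = u *\<^sub>R q1' + (1 - u) *\<^sub>R q2'"
  define y where "y = u *\<^sub>R y1 + (1 - u) *\<^sub>R y2"
  define r where "r = u * r1 + (1 - u) * r2"
  have cq: "c q \<noteq> \<infinity> \<and> real_of_ereal (c q) \<le> u * real_of_ereal (c q1) + (1 - u) * real_of_ereal (c q2)"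
    unfolding q_def using cost_conv[OF cv(1) nn(1) 1(2) 2(2) 1(5) 2(5)] u by auto
  have cq': "c' q' \<noteq> \<infinity> \<and> real_of_ereal (c' q') \<le> u * real_of_ereal (c' q1') + (1 - u) * real_of_ereal (c' q2')"
    unfolding q'_def using cost_conv[OF cv(2) nn(2) 1(3) 2(3) 1(6) 2(6)] u by auto
  have "u * (real_of_ereal (c q1) + real_of_ereal (c' q1') - K) \<le> u * r1"
    using 1(7) u by (intro mult_left_mono) auto
  moreover have "(1 - u) * (real_of_ereal (c q2) + real_of_ereal (c' q2') - K) \<le> (1 - u) * r2"
    using 2(7) u by (intro mult_left_mono) auto
  ultimately have rr: "real_of_ereal (c q) + real_of_ereal (c' q') - K \<le> r"
    using cq cq' unfolding r_def by (simp add: algebra_simps)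
  have yy: "\<forall>t. 0 \<le> y $ t" using 1(4) 2(4) u unfolding y_def by simp
  have eq: "(1 - u) *\<^sub>R z + u *\<^sub>R x = ((q + q' - p - p', Tv p q' - y), r)"
    unfolding 1(1) 2(1) q_def q'_def y_def r_def Tv_affine
    by (simp add: algebra_simps)
  show "(1 - u) *\<^sub>R z + u *\<^sub>R x \<in> Eset c c' p p' K"
    unfolding eq Eset_def
    using simplex_convex[OF 1(2) 2(2), of u] simplex_convex[OF 1(3) 2(3), of u] u cq cq' yy rr
    unfolding q_def q'_def by blast
qed



lemma zero_notin_closure:
  fixes c c' :: "(real^'s::{finite,linorder}) \<Rightarrow> ereal"
  assumes nn: "\<forall>q\<in>simplexS. 0 \<le> c q" "\<forall>q\<in>simplexS. 0 \<le> c' q"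
    and lsc: "lsc_cost c" "lsc_cost c'"
    and p: "c p \<noteq> \<infinity>" "c' p' \<noteq> \<infinity>" "p \<in> simplexS" "p' \<in> simplexS"
    and noF: "\<forall>q\<in>simplexS. \<forall>q'\<in>simplexS. fosd p q' \<longrightarrow> q + q' = p + p' \<longrightarrow> c p + c' p' < c q + c' q'"
    and K: "K = real_of_ereal (c p) + real_of_ereal (c' p')"
  shows "0 \<notin> closure (Eset c c' p p' K)"
proof
  assume "0 \<in> closure (Eset c c' p p' K)"
  then obtain X where X: "\<And>n. X n \<in> Eset c c' p p' K" "X \<longlonglongrightarrow> 0"
    unfolding closure_sequential by blast
  have "\<forall>n. \<exists>q q' y r. X n = ((q + q' - p - p', Tv p q' - y), r) \<and> q \<in> simplexS \<and> q' \<in> simplexS \<and>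
      (\<forall>t. 0 \<le> y $ t) \<and> c q \<noteq> \<infinity> \<and> c' q' \<noteq> \<infinity> \<and> real_of_ereal (c q) + real_of_ereal (c' q') - K \<le> r"
    using X(1) unfolding Eset_def by blast
  hence "\<exists>q q' y r. \<forall>n. X n = ((q n + q' n - p - p', Tv p (q' n) - y n), r n) \<and> q n \<in> simplexS \<and> q' n \<in> simplexS \<and>
      (\<forall>t. 0 \<le> y n $ t) \<and> c (q n) \<noteq> \<infinity> \<and> c' (q' n) \<noteq> \<infinity> \<and> real_of_ereal (c (q n)) + real_of_ereal (c' (q' n)) - K \<le> r n"
    by (simp only: choice_iff)
  then obtain q q' y r where qq: "\<And>n. X n = ((q n + q' n - p - p', Tv p (q' n) - y n), r n)"
    "\<And>n. q n \<in> simplexS" "\<And>n. q' n \<in> simplexS" "\<And>n t. 0 \<le> y n $ t" "\<And>n. c (q n) \<noteq> \<infinity>"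
    "\<And>n. c' (q' n) \<noteq> \<infinity>" "\<And>n. real_of_ereal (c (q n)) + real_of_ereal (c' (q' n)) - K \<le> r n"
    by blast
  have Z1: "(\<lambda>n. q n + q' n - p - p') \<longlonglongrightarrow> 0"
    using tendsto_fst[OF tendsto_fst[OF X(2)]] by (simp add: qq(1))
  have Z2: "(\<lambda>n. Tv p (q' n) - y n) \<longlonglongrightarrow> 0"
    using tendsto_snd[OF tendsto_fst[OF X(2)]] by (simp add: qq(1))
  have Zr: "r \<longlonglongrightarrow> 0"
    using tendsto_snd[OF X(2)] by (simp add: qq(1))
  have cpt: "compact (simplexS \<times> (simplexS :: (real^'s::{finite,linorder}) set))"
    by (intro compact_Times compact_simplex)
  have hq: "\<And>n. (q n, q' n) \<in> simplexS \<times> simplexS" using qq(2,3) by auto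
  have "\<exists>l\<in>simplexS \<times> simplexS. \<exists>\<sigma>. strict_mono \<sigma> \<and> ((\<lambda>n. (q n, q' n)) \<circ> \<sigma>) \<longlonglongrightarrow> l"
    using cpt[unfolded compact_def, rule_format, OF hq] .
  then obtain l \<sigma> where l: "l \<in> simplexS \<times> simplexS" "strict_mono \<sigma>"
    "((\<lambda>n. (q n, q' n)) \<circ> \<sigma>) \<longlonglongrightarrow> l" by blast
  obtain Q Q' where QQ: "l = (Q, Q')" by (cases l)
  have QS: "Q \<in> simplexS" "Q' \<in> simplexS" using l(1) QQ by auto
  have lq: "(\<lambda>n. q (\<sigma> n)) \<longlonglongrightarrow> Q" using tendsto_fst[OF l(3)] QQ by (simp add: o_def)
  have lq': "(\<lambda>n. q' (\<sigma> n)) \<longlonglongrightarrow> Q'" using tendsto_snd[OF l(3)] QQ by (simp add: o_def)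
  have L1: "(\<lambda>n. q (\<sigma> n) + q' (\<sigma> n) - p - p') \<longlonglongrightarrow> 0"
    using LIMSEQ_subseq_LIMSEQ[OF Z1 l(2)] by (simp add: o_def)
  have L2: "(\<lambda>n. q (\<sigma> n) + q' (\<sigma> n) - p - p') \<longlonglongrightarrow> Q + Q' - p - p'"
    by (intro tendsto_intros lq lq')
  have "Q + Q' - p - p' = 0" using LIMSEQ_unique[OF L2 L1] .
  hence sum: "Q + Q' = p + p'" by (simp add: algebra_simps)
  have fos: "fosd p Q'"
    unfolding fosd_def
  proof
    fix t :: "'s::{finite,linorder}"
    have a: "(\<lambda>n. (Tv p (q' (\<sigma> n)) - y (\<sigma> n)) $ t) \<longlonglongrightarrow> 0"
      using tendsto_vec_nth[OF LIMSEQ_subseq_LIMSEQ[OF Z2 l(2)], of t] by (simp add: o_def)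
    have b: "(\<lambda>n. Tv p (q' (\<sigma> n)) $ t) \<longlonglongrightarrow> Tv p Q' $ t"
      unfolding Tv_def by (simp, intro tendsto_intros tendsto_vec_nth lq')
    have "0 \<le> Tv p Q' $ t"
    proof (rule LIMSEQ_le[OF a b])
      show "\<exists>N. \<forall>n\<ge>N. (Tv p (q' (\<sigma> n)) - y (\<sigma> n)) $ t \<le> Tv p (q' (\<sigma> n)) $ t"
        using qq(4) by auto
    qed
    thus "(\<Sum>s\<in>{s. t \<le> s}. Q' $ s) \<le> (\<Sum>s\<in>{s. t \<le> s}. p $ s)"
      by (simp add: Tv_def sum_subtractf)
  qed
  have lc: "c Q \<le> liminf (\<lambda>n. c (q (\<sigma> n)))"
    using mp[OF spec[OF bspec[OF lsc(1)[unfolded lsc_cost_def] QS(1)], of "\<lambda>n. q (\<sigma> n)"]] qq(2) lq by auto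
  have lc': "c' Q' \<le> liminf (\<lambda>n. c' (q' (\<sigma> n)))"
    using mp[OF spec[OF bspec[OF lsc(2)[unfolded lsc_cost_def] QS(2)], of "\<lambda>n. q' (\<sigma> n)"]] qq(3) lq' by auto
  have "liminf (\<lambda>n. c (q (\<sigma> n))) + liminf (\<lambda>n. c' (q' (\<sigma> n))) \<le> liminf (\<lambda>n. c (q (\<sigma> n)) + c' (q' (\<sigma> n)))"
    by (rule Liminf_add_le) (use nn qq(2,3) in auto)
  also have "\<dots> \<le> liminf (\<lambda>n. ereal (K + r (\<sigma> n)))"
  proof (intro Liminf_mono always_eventually allI)
    fix n
    have "0 \<le> c (q (\<sigma> n))" "0 \<le> c' (q' (\<sigma> n))" using nn qq(2,3) by auto
    thus "c (q (\<sigma> n)) + c' (q' (\<sigma> n)) \<le> ereal (K + r (\<sigma> n))"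
      using qq(5,6,7)[of "\<sigma> n"] by (cases "c (q (\<sigma> n))"; cases "c' (q' (\<sigma> n))") auto
  qed
  also have "\<dots> = ereal K"
  proof (rule lim_imp_Liminf)
    show "(\<lambda>n. ereal (K + r (\<sigma> n))) \<longlonglongrightarrow> ereal K"
      using tendsto_add[OF tendsto_const[of K] LIMSEQ_subseq_LIMSEQ[OF Zr l(2)]] by (intro tendsto_intros) (simp add: o_def)
  qed simp
  finally have "c Q + c' Q' \<le> ereal K" using lc lc' add_mono order_trans by blast
  moreover have "ereal K = c p + c' p'"
    using p nn K by (cases "c p"; cases "c' p'") auto
  ultimately show False using noF QS sum fos by force
qed



lemma sum_scale: "(\<Sum>s\<in>A. ((k::real) * f s) * g s) = k * (\<Sum>s\<in>A. f s * g s)"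
  by (simp add: sum_distrib_left mult.assoc)

lemma inner_triple: "inner ((\<alpha>::real^'n, \<beta>::real^'n), \<gamma>::real) ((z1, z2), r) =
   (\<Sum>s\<in>UNIV. \<alpha> $ s * z1 $ s) + (\<Sum>s\<in>UNIV. \<beta> $ s * z2 $ s) + \<gamma> * r"
  by (simp add: inner_prod_def inner_vec_def)

lemma aux_div:
  fixes g b S1 S2 C K :: real
  assumes "0 < g" "b < S1 + S2 + g * (C - K)"
  shows "K + (- 1 / g) * S1 + (- 1 / g) * S2 + b / g \<le> C"
proof -
  have "b / g < (S1 + S2 + g * (C - K)) / g" using assms by (intro divide_strict_right_mono)
  also have "\<dots> = S1 / g + S2 / g + (C - K)" using assms by (simp add: add_divide_distrib)
  finally show ?thesis by simp
qed

lemma dual_exists: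
  fixes c c' :: "(real^'s::{finite,linorder}) \<Rightarrow> ereal"
  assumes nn: "\<forall>q\<in>simplexS. 0 \<le> c q" "\<forall>q\<in>simplexS. 0 \<le> c' q"
    and cv: "convex_cost c" "convex_cost c'"
    and lsc: "lsc_cost c" "lsc_cost c'"
    and p: "c p \<noteq> \<infinity>" "c' p' \<noteq> \<infinity>" "p \<in> simplexS" "p' \<in> simplexS"
    and noF: "\<forall>q\<in>simplexS. \<forall>q'\<in>simplexS. fosd p q' \<longrightarrow> q + q' = p + p' \<longrightarrow> c p + c' p' < c q + c' q'"
  shows "\<exists>a \<mu> \<epsilon>. 0 < \<epsilon> \<and> (\<forall>t. 0 \<le> \<mu> t) \<and> (\<forall>q\<in>simplexS. \<forall>q'\<in>simplexS. c q \<noteq> \<infinity> \<longrightarrow> c' q' \<noteq> \<infinity> \<longrightarrow>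
     real_of_ereal (c p) + real_of_ereal (c' p') + (\<Sum>s\<in>UNIV. a s * (q $ s + q' $ s - p $ s - p' $ s))
       + (\<Sum>t\<in>UNIV. \<mu> t * Tv p q' $ t) + \<epsilon> \<le> real_of_ereal (c q) + real_of_ereal (c' q'))"
proof -
  define K where "K = real_of_ereal (c p) + real_of_ereal (c' p')"
  have K0: "0 \<le> K" using nn p unfolding K_def by (simp add: real_of_ereal_pos)
  define E where "E = Eset c c' p p' K"
  have memb: "((q + q' - p - p', Tv p q' - y), r) \<in> E"
    if "q \<in> simplexS" "q' \<in> simplexS" "\<forall>t. 0 \<le> y $ t" "c q \<noteq> \<infinity>" "c' q' \<noteq> \<infinity>"
       "real_of_ereal (c q) + real_of_ereal (c' q') - K \<le> r" for q q' y r
    using that unfolding E_def Eset_def by blast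
  have "convex (closure E)" unfolding E_def by (intro convex_closure Eset_convex cv nn)
  moreover have "closed (closure E)" by simp
  moreover have "0 \<notin> closure E"
    unfolding E_def by (rule zero_notin_closure[OF nn lsc p noF K_def])
  ultimately obtain v b where vb: "inner v 0 < b" "\<forall>x\<in>closure E. b < inner v x"
    using separating_hyperplane_closed_point by blast
  have b: "0 < b" using vb by simp
  have vE: "\<And>x. x \<in> E \<Longrightarrow> b < inner v x" using vb closure_subset by blast
  obtain \<alpha> \<beta> \<gamma> where v: "v = ((\<alpha>, \<beta>), \<gamma>)" by (metis prod.collapse)
  define I0 where "I0 = (\<Sum>s\<in>UNIV. \<beta> $ s * Tv p p' $ s)"
  have pp: "p + p' - p - p' = 0" by simp
  have g0: "0 \<le> \<gamma>"
  proof (rule ccontr)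
    assume "\<not> 0 \<le> \<gamma>"
    hence g: "\<gamma> < 0" by simp
    define R where "R = (\<bar>I0\<bar> + b + 1) / (- \<gamma>)"
    have R0: "0 \<le> R" using g b unfolding R_def by (intro divide_nonneg_pos) auto
    have gR: "\<gamma> * R = - (\<bar>I0\<bar> + b + 1)" using g unfolding R_def by (simp add: field_simps)
    have "((p + p' - p - p', Tv p p' - 0), R) \<in> E"
      by (rule memb) (use p R0 K_def in auto)
    hence "b < inner v ((p + p' - p - p', Tv p p' - 0), R)" by (rule vE)
    also have "\<dots> = I0 + \<gamma> * R" unfolding v inner_triple pp I0_def by simp
    finally show False using gR abs_ge_self[of I0] b by linarith
  qed
  have bt: "\<beta> $ t \<le> 0" for t
  proof (rule ccontr)
    assume "\<not> \<beta> $ t \<le> 0"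
    hence g: "0 < \<beta> $ t" by simp
    define Y where "Y = (\<bar>I0\<bar> + b + 1) / \<beta> $ t"
    have Y0: "0 \<le> Y" using g b unfolding Y_def by (intro divide_nonneg_pos) auto
    define y :: "real^'s::{finite,linorder}" where "y = (\<chi> i. if i = t then Y else 0)"
    have y0: "\<forall>i. 0 \<le> y $ i" using Y0 unfolding y_def by simp
    have "((p + p' - p - p', Tv p p' - y), 0) \<in> E"
      by (rule memb) (use p y0 K_def in auto)
    hence "b < inner v ((p + p' - p - p', Tv p p' - y), 0)" by (rule vE)
    also have "\<dots> = (\<Sum>s\<in>UNIV. \<beta> $ s * (Tv p p' $ s - y $ s))" unfolding v inner_triple pp by simp
    also have "\<dots> = I0 - (\<Sum>s\<in>UNIV. \<beta> $ s * y $ s)"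
      unfolding I0_def by (simp add: right_diff_distrib sum_subtractf)
    also have "(\<Sum>s\<in>UNIV. \<beta> $ s * y $ s) = \<beta> $ t * Y"
      unfolding y_def by (simp add: if_distrib cong: if_cong)
    also have "\<beta> $ t * Y = \<bar>I0\<bar> + b + 1" using g unfolding Y_def by simp
    finally show False using abs_ge_self[of I0] b by linarith
  qed
  have main: "b < (\<Sum>s\<in>UNIV. \<alpha> $ s * (q $ s + q' $ s - p $ s - p' $ s)) + (\<Sum>t\<in>UNIV. \<beta> $ t * Tv p q' $ t)
      + \<gamma> * (real_of_ereal (c q) + real_of_ereal (c' q') - K)"
    if q: "q \<in> simplexS" "q' \<in> simplexS" "c q \<noteq> \<infinity>" "c' q' \<noteq> \<infinity>" for q q'
  proof -
    have "((q + q' - p - p', Tv p q' - 0), real_of_ereal (c q) + real_of_ereal (c' q') - K) \<in> E"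
      by (rule memb) (use q in auto)
    hence "b < inner v ((q + q' - p - p', Tv p q' - 0), real_of_ereal (c q) + real_of_ereal (c' q') - K)"
      by (rule vE)
    thus ?thesis unfolding v inner_triple by simp
  qed
  show ?thesis
  proof (cases "\<gamma> = 0")
    case False
    hence g: "0 < \<gamma>" using g0 by simp
    show ?thesis
    proof (intro exI conjI allI ballI impI)
      show "0 < b / \<gamma>" using b g by simp
      fix t show "0 \<le> - 1 / \<gamma> * \<beta> $ t" using bt[of t] g by (simp add: divide_nonpos_pos mult_nonpos_nonpos)
    next
      fix q q' :: "real^'s::{finite,linorder}" assume q: "q \<in> simplexS" "q' \<in> simplexS" "c q \<noteq> \<infinity>" "c' q' \<noteq> \<infinity>"
      have m: "b < (\<Sum>s\<in>UNIV. \<alpha> $ s * (q $ s + q' $ s - p $ s - p' $ s)) + (\<Sum>t\<in>UNIV. \<beta> $ t * Tv p q' $ t)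
        + \<gamma> * (real_of_ereal (c q) + real_of_ereal (c' q') - K)" by (rule main[OF q])
      show "real_of_ereal (c p) + real_of_ereal (c' p') + (\<Sum>s\<in>UNIV. (- 1 / \<gamma> * \<alpha> $ s) * (q $ s + q' $ s - p $ s - p' $ s))
       + (\<Sum>t\<in>UNIV. (- 1 / \<gamma> * \<beta> $ t) * Tv p q' $ t) + b / \<gamma> \<le> real_of_ereal (c q) + real_of_ereal (c' q')"
        unfolding sum_scale K_def[symmetric] using aux_div[OF g m] .
    qed
  next
    case True
    define M where "M = (K + 1) / b"
    have M0: "0 \<le> M" using K0 b unfolding M_def by simp
    have Mb: "M * b = K + 1" using b unfolding M_def by simp
    show ?thesis
    proof (intro exI conjI allI ballI impI)
      show "(0::real) < 1" by simp
      fix t show "0 \<le> - M * \<beta> $ t" using bt[of t] M0 by (simp add: mult_nonneg_nonpos)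
    next
      fix q q' :: "real^'s::{finite,linorder}" assume q: "q \<in> simplexS" "q' \<in> simplexS" "c q \<noteq> \<infinity>" "c' q' \<noteq> \<infinity>"
      have m: "b < (\<Sum>s\<in>UNIV. \<alpha> $ s * (q $ s + q' $ s - p $ s - p' $ s)) + (\<Sum>t\<in>UNIV. \<beta> $ t * Tv p q' $ t)"
        using main[OF q] True by simp
      have "M * b \<le> M * ((\<Sum>s\<in>UNIV. \<alpha> $ s * (q $ s + q' $ s - p $ s - p' $ s)) + (\<Sum>t\<in>UNIV. \<beta> $ t * Tv p q' $ t))"
        using m M0 by (intro mult_left_mono) auto
      moreover have "0 \<le> real_of_ereal (c q) + real_of_ereal (c' q')"
        using nn q by (simp add: real_of_ereal_pos)
      ultimately show "real_of_ereal (c p) + real_of_ereal (c' p') + (\<Sum>s\<in>UNIV. (- M * \<alpha> $ s) * (q $ s + q' $ s - p $ s - p' $ s))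
       + (\<Sum>t\<in>UNIV. (- M * \<beta> $ t) * Tv p q' $ t) + 1 \<le> real_of_ereal (c q) + real_of_ereal (c' q')"
        unfolding sum_scale K_def[symmetric] using Mb by (simp add: algebra_simps)
    qed
  qed
qed



definition dot :: "('s::{finite,linorder} \<Rightarrow> real) \<Rightarrow> real^'s::{finite,linorder} \<Rightarrow> real" where
  "dot A p = (\<Sum>s\<in>UNIV. A s * p $ s)"

lemma dot_diff: "dot (\<lambda>s. A s - B s) x = dot A x - dot B x"
  by (simp add: dot_def left_diff_distrib sum_subtractf)
lemma dot_add: "dot A (x + y) = dot A x + dot A y"
  by (simp add: dot_def distrib_left sum.distrib)
lemma dot_sub: "dot A (x - y) = dot A x - dot A y"
  by (simp add: dot_def right_diff_distrib sum_subtractf)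

lemma W_ge':
  fixes c :: "(real^'s::{finite,linorder}) \<Rightarrow> ereal"
  shows "okc c \<Longrightarrow> p \<in> simplexS \<Longrightarrow> c p \<noteq> \<infinity> \<Longrightarrow> dot A p - real_of_ereal (c p) \<le> W c A"
  unfolding dot_def by (rule W_ge)

lemma W_le':
  fixes c :: "(real^'s::{finite,linorder}) \<Rightarrow> ereal"
  assumes "okc c" "\<And>p. p \<in> simplexS \<Longrightarrow> c p \<noteq> \<infinity> \<Longrightarrow> dot A p - real_of_ereal (c p) \<le> z"
  shows "W c A \<le> z"
  using assms unfolding dot_def by (rule W_le)

lemma W_approx':
  fixes c :: "(real^'s::{finite,linorder}) \<Rightarrow> ereal"
  assumes "okc c" "0 < e"
  shows "\<exists>p\<in>simplexS. c p \<noteq> \<infinity> \<and> W c A - e < dot A p - real_of_ereal (c p)"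
  using W_approx[OF assms] unfolding dot_def .

lemma norm01:
  fixes u :: "real \<Rightarrow> real"
  assumes "strict_mono_on Prz u" "{u pi0, u pi1} = {0, 1}" "pi0 \<in> Prz" "pi1 \<in> Prz" "pi0 < pi1"
  shows "u pi0 = 0 \<and> u pi1 = 1"
proof -
  have "u pi0 < u pi1" using assms by (auto simp: strict_mono_on_def)
  thus ?thesis using assms(2) by (auto simp: doubleton_eq_iff)
qed

lemma u_eq:
  fixes u u' :: "real \<Rightarrow> real"
  assumes sm: "strict_mono_on Prz u" and n: "u pi0 = 0" "u pi1 = 1" "u' pi0 = 0" "u' pi1 = 1"
    and pi: "pi0 \<in> Prz" "pi1 \<in> Prz" "pi0 < pi1"
    and H: "\<And>x y. x \<in> lotteries Prz \<Longrightarrow> y \<in> lotteries Prz \<Longrightarrow> expu u x = expu u y \<Longrightarrow> expu u' x = expu u' y"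
    and x: "x \<in> Prz"
  shows "u x = u' x"
proof -
  have dx: "dlt x \<in> lotteries Prz" "dlt pi0 \<in> lotteries Prz" "dlt pi1 \<in> lotteries Prz"
    using x pi by (auto intro: dlt_lottery)
  consider "x < pi0" | "pi0 \<le> x \<and> x \<le> pi1" | "pi1 < x" by linarith
  then show ?thesis
  proof cases
    case 1
    have "u x < u pi0" using sm x pi(1) 1 unfolding strict_mono_on_def by blast
    hence ux: "u x < 0" using n by simp
    define a where "a = 1 / (1 - u x)"
    have a: "0 < a" "a < 1" using ux by (auto simp: a_def field_simps)
    have L: "mix a (dlt x) (dlt pi1) \<in> lotteries Prz" using mix_lottery[OF dx(1,3)] a by auto
    have "expu u (mix a (dlt x) (dlt pi1)) = a * u x + (1 - a)"
      using expu_mix[OF dx(1,3)] n by (simp add: expu_dlt)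
    also have "\<dots> = 0" using ux by (simp add: a_def field_simps)
    finally have "expu u (mix a (dlt x) (dlt pi1)) = expu u (dlt pi0)" using n by (simp add: expu_dlt)
    hence "expu u' (mix a (dlt x) (dlt pi1)) = expu u' (dlt pi0)" using H L dx by blast
    hence "a * u' x + (1 - a) = 0" using expu_mix[OF dx(1,3)] n by (simp add: expu_dlt)
    hence "u' x = (a - 1) / a" using a by (simp add: field_simps)
    moreover have "(a - 1) / a = 1 - 1 / a" using a by (simp add: field_simps)
    moreover have "1 / a = 1 - u x" by (simp add: a_def)
    ultimately show ?thesis by simp
  next
    case 2
    have "u pi0 \<le> u x" "u x \<le> u pi1" using sm x pi(1,2) 2 unfolding strict_mono_on_def
      by (metis order.order_iff_strict)+
    hence ux: "0 \<le> u x" "u x \<le> 1" using n by simp_all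
    define a where "a = u x"
    have L: "mix a (dlt pi1) (dlt pi0) \<in> lotteries Prz" using mix_lottery[OF dx(3,2)] ux by (auto simp: a_def)
    have "expu u (mix a (dlt pi1) (dlt pi0)) = expu u (dlt x)"
      using expu_mix[OF dx(3,2)] n by (simp add: expu_dlt a_def)
    hence "expu u' (mix a (dlt pi1) (dlt pi0)) = expu u' (dlt x)" using H L dx by blast
    thus ?thesis using expu_mix[OF dx(3,2)] n by (simp add: expu_dlt a_def)
  next
    case 3
    have "u pi1 < u x" using sm x pi(2) 3 unfolding strict_mono_on_def by blast
    hence ux: "1 < u x" using n by simp
    define a where "a = 1 / u x"
    have a: "0 < a" "a < 1" using ux by (auto simp: a_def field_simps)
    have L: "mix a (dlt x) (dlt pi0) \<in> lotteries Prz" using mix_lottery[OF dx(1,2)] a by auto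
    have "expu u (mix a (dlt x) (dlt pi0)) = a * u x"
      using expu_mix[OF dx(1,2)] n by (simp add: expu_dlt)
    also have "\<dots> = 1" using ux by (simp add: a_def)
    finally have "expu u (mix a (dlt x) (dlt pi0)) = expu u (dlt pi1)" using n by (simp add: expu_dlt)
    hence "expu u' (mix a (dlt x) (dlt pi0)) = expu u' (dlt pi1)" using H L dx by blast
    hence "a * u' x = 1" using expu_mix[OF dx(1,2)] n by (simp add: expu_dlt)
    thus ?thesis using ux a by (simp add: a_def field_simps)
  qed
qed



lemma const_app[simp]: "const_contract x s = x" by (simp add: const_contract_def)

lemma half_eq:
  fixes p p' q q' :: "real^'s::{finite,linorder}"
  shows "(1/2) *\<^sub>R p + (1/2) *\<^sub>R p' = (1/2) *\<^sub>R q + (1/2) *\<^sub>R q' \<longleftrightarrow> p + p' = q + q'"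
proof -
  have "(1/2) *\<^sub>R p + (1/2) *\<^sub>R p' = (1/2::real) *\<^sub>R (p + p')" by (simp add: scaleR_right_distrib)
  moreover have "(1/2) *\<^sub>R q + (1/2) *\<^sub>R q' = (1/2::real) *\<^sub>R (q + q')" by (simp add: scaleR_right_distrib)
  ultimately show ?thesis by simp
qed

lemma contract_lot: "w \<in> contracts Prz \<Longrightarrow> w s \<in> lotteries Prz"
  by (simp add: contracts_def)

lemma if_dir:
  fixes c c' :: "(real^('s::{finite,linorder})) \<Rightarrow> ereal" and u u' :: "real \<Rightarrow> real"
    and R R' :: "'s contract \<Rightarrow> 's contract \<Rightarrow> bool"
  assumes rep: "parsimonious_rep Prz pi0 pi1 R c u" and rep': "parsimonious_rep Prz pi0 pi1 R' c' u'"
    and ueq: "\<forall>x\<in>Prz. u x = u' x" and ups: "up_shifted c c'"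
  shows "more_optimistic Prz R R'"
  unfolding more_optimistic_def
proof (intro ballI impI)
  fix w w' assume w: "w \<in> contracts Prz" and w': "w' \<in> contracts Prz" and st: "steeper R w w'"
  have ok: "okc c" "okc c'" using rep rep' by (auto intro: rep_okc)
  have nn: "\<forall>q\<in>simplexS. 0 \<le> c q" "\<forall>q\<in>simplexS. 0 \<le> c' q" using ok by (auto simp: okc_def)
  define A where "A = (\<lambda>s. expu u (w s))"
  define B where "B = (\<lambda>s. expu u (w' s))"
  have mono: "\<forall>s s'. s' \<le> s \<longrightarrow> A s' - B s' \<le> A s - B s"
  proof (intro allI impI)
    fix s s' :: 's assume ss: "s' \<le> s"
    have l1: "mix (1/2) (w s) (w' s') \<in> lotteries Prz" "mix (1/2) (w s') (w' s) \<in> lotteries Prz"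
      using mix_lottery[OF contract_lot[OF w] contract_lot[OF w'], of "1/2"] by auto
    have "R (const_contract (mix (1/2) (w s) (w' s'))) (const_contract (mix (1/2) (w s') (w' s)))"
      using st ss unfolding steeper_def by blast
    hence "expu u (mix (1/2) (w s') (w' s)) \<le> expu u (mix (1/2) (w s) (w' s'))"
      using R_const_iff[OF rep l1] by simp
    thus "A s' - B s' \<le> A s - B s"
      using expu_mix[OF contract_lot[OF w] contract_lot[OF w'], of u "1/2"] unfolding A_def B_def
      by (simp add: expu_mix[OF contract_lot[OF w] contract_lot[OF w']])
  qed
  have key: "W c' A + W c B \<le> W c A + W c' B"
  proof (rule field_le_epsilon)
    fix e :: real assume e: "0 < e"
    have e2: "0 < e / 2" using e by simp
    obtain p where p: "p \<in> simplexS" "c p \<noteq> \<infinity>" "W c B - e / 2 < dot B p - real_of_ereal (c p)"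
      using W_approx'[OF ok(1) e2, of B] by blast
    obtain p' where p': "p' \<in> simplexS" "c' p' \<noteq> \<infinity>" "W c' A - e / 2 < dot A p' - real_of_ereal (c' p')"
      using W_approx'[OF ok(2) e2, of A] by blast
    obtain q q' where q: "q \<in> simplexS" "q' \<in> simplexS" "fosd p q'" "fosd q p'"
      "(1/2) *\<^sub>R p + (1/2) *\<^sub>R p' = (1/2) *\<^sub>R q + (1/2) *\<^sub>R q'" "c q + c' q' \<le> c p + c' p'"
      using ups p(1) p'(1) unfolding up_shifted_def by blast
    have n4: "0 \<le> c p" "0 \<le> c' p'" "0 \<le> c q" "0 \<le> c' q'" using nn p p' q by auto
    obtain cp cp' where cp: "c p = ereal cp" "c' p' = ereal cp'" using p(2) p'(2) n4 by (cases "c p"; cases "c' p'") auto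
    have cq1: "c q \<noteq> \<infinity>"
    proof
      assume "c q = \<infinity>"
      hence "c q + c' q' = \<infinity>" using n4(4) by simp
      hence "\<infinity> \<le> c p + c' p'" using q(6) by metis
      moreover have "c p + c' p' = ereal (cp + cp')" using cp by simp
      ultimately show False by simp
    qed
    have cq2: "c' q' \<noteq> \<infinity>"
    proof
      assume "c' q' = \<infinity>"
      hence "c q + c' q' = \<infinity>" using n4(3) by simp
      hence "\<infinity> \<le> c p + c' p'" using q(6) by metis
      moreover have "c p + c' p' = ereal (cp + cp')" using cp by simp
      ultimately show False by simp
    qed
    obtain cq cq' where cq: "c q = ereal cq" "c' q' = ereal cq'" using cq1 cq2 n4 by (cases "c q"; cases "c' q'") auto
    have fin: "c q \<noteq> \<infinity>" "c' q' \<noteq> \<infinity>"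
      "real_of_ereal (c q) + real_of_ereal (c' q') \<le> real_of_ereal (c p) + real_of_ereal (c' p')"
      using q(6) cq cp by auto
    have qeq: "q = p + p' - q'" using q(5) unfolding half_eq by (simp add: algebra_simps)
    have g1: "dot A q - real_of_ereal (c q) \<le> W c A" by (rule W_ge'[OF ok(1) q(1) fin(1)])
    have g2: "dot B q' - real_of_ereal (c' q') \<le> W c' B" by (rule W_ge'[OF ok(2) q(2) fin(2)])
    have dq: "dot A q = dot A p + dot A p' - dot A q'" unfolding qeq by (simp add: dot_add dot_sub)
    have fd: "dot (\<lambda>s. A s - B s) q' \<le> dot (\<lambda>s. A s - B s) p"
      unfolding dot_def by (rule fosd_dot[OF p(1) q(2) q(3)]) (use mono in auto)
    hence fd': "dot A q' - dot B q' \<le> dot A p - dot B p" by (simp add: dot_diff)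
    show "W c' A + W c B \<le> W c A + W c' B + e"
      using g1 g2 dq fd' fin(3) p(3) p'(3) by linarith
  qed
  have cA: "(\<lambda>s. expu u' (w s)) = A" unfolding A_def
    by (rule ext, rule expu_cong[OF contract_lot[OF w]]) (use ueq in auto)
  have cB: "(\<lambda>s. expu u' (w' s)) = B" unfolding B_def
    by (rule ext, rule expu_cong[OF contract_lot[OF w']]) (use ueq in auto)
  have R1: "R w w' \<longleftrightarrow> W c B \<le> W c A" using R_iff[OF rep w w'] unfolding A_def B_def .
  have R2: "R' w w' \<longleftrightarrow> W c' B \<le> W c' A" using R_iff[OF rep' w w'] cA cB by simp
  have S1: "strict R w w' \<longleftrightarrow> W c B < W c A" using strictR_iff[OF rep w w'] unfolding A_def B_def .
  have S2: "strict R' w w' \<longleftrightarrow> W c' B < W c' A" using strictR_iff[OF rep' w w'] cA cB by simp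
  show "(R' w w' \<longrightarrow> R w w') \<and> (strict R' w w' \<longrightarrow> strict R w w')"
    using R1 R2 S1 S2 key by linarith
qed



lemma onlyif_dir:
  fixes c c' :: "(real^('s::{finite,linorder})) \<Rightarrow> ereal" and u u' :: "real \<Rightarrow> real"
    and R R' :: "'s contract \<Rightarrow> 's contract \<Rightarrow> bool"
  assumes rep: "parsimonious_rep Prz pi0 pi1 R c u" and rep': "parsimonious_rep Prz pi0 pi1 R' c' u'"
    and unb: "unbounded_pref Prz R" and pi: "pi0 \<in> Prz" "pi1 \<in> Prz" "pi0 < pi1"
    and mo: "more_optimistic Prz R R'"
  shows "(\<forall>x\<in>Prz. u x = u' x) \<and> up_shifted c c'"
proof -
  have ok: "okc c" "okc c'" using rep rep' by (auto intro: rep_okc)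
  have nn: "\<forall>q\<in>simplexS. 0 \<le> c q" "\<forall>q\<in>simplexS. 0 \<le> c' q" using ok by (auto simp: okc_def)
  have cv: "convex_cost c" "convex_cost c'" using rep rep' by (auto simp: parsimonious_rep_def)
  have lsc: "lsc_cost c" "lsc_cost c'" using rep rep' by (auto simp: parsimonious_rep_def)
  have cmp: "(expu u' y \<le> expu u' x \<longrightarrow> expu u y \<le> expu u x) \<and> (expu u' y < expu u' x \<longrightarrow> expu u y < expu u x)"
    if xy: "x \<in> lotteries Prz" "y \<in> lotteries Prz" for x y
  proof -
    have m: "mix (1/2) x y \<in> lotteries Prz" using mix_lottery[OF xy, of "1/2"] by simp
    have st: "steeper R (const_contract x) (const_contract y)"
      unfolding steeper_def using R_const_iff[OF rep m m] by simp
    have "(R' (const_contract x) (const_contract y) \<longrightarrow> R (const_contract x) (const_contract y)) \<and>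
          (strict R' (const_contract x) (const_contract y) \<longrightarrow> strict R (const_contract x) (const_contract y))"
      using mo st const_contract_in[OF xy(1)] const_contract_in[OF xy(2)] unfolding more_optimistic_def by blast
    thus ?thesis using R_const_iff[OF rep xy] R_const_iff[OF rep' xy] strictR_const_iff[OF rep xy]
      strictR_const_iff[OF rep' xy] by simp
  qed
  have H: "expu u' x = expu u' y" if "x \<in> lotteries Prz" "y \<in> lotteries Prz" "expu u x = expu u y" for x y
    using cmp[OF that(1,2)] cmp[OF that(2,1)] that(3) by linarith
  have n: "u pi0 = 0 \<and> u pi1 = 1" "u' pi0 = 0 \<and> u' pi1 = 1"
    using norm01[of Prz u pi0 pi1] norm01[of Prz u' pi0 pi1] rep rep' pi by (simp_all add: parsimonious_rep_def)
  have sm: "strict_mono_on Prz u" using rep by (simp add: parsimonious_rep_def)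
  have ueq: "\<forall>x\<in>Prz. u x = u' x"
    using u_eq[OF sm _ _ _ _ pi H] n by blast
  have ups: "up_shifted c c'"
    unfolding up_shifted_def
  proof (intro ballI)
    fix p p' :: "real^'s::{finite,linorder}" assume p: "p \<in> simplexS" and p': "p' \<in> simplexS"
    show "\<exists>q\<in>simplexS. \<exists>q'\<in>simplexS. fosd p q' \<and> fosd q p' \<and>
      (1/2) *\<^sub>R p + (1/2) *\<^sub>R p' = (1/2) *\<^sub>R q + (1/2) *\<^sub>R q' \<and> c q + c' q' \<le> c p + c' p'"
    proof (cases "c p = \<infinity> \<or> c' p' = \<infinity>")
      case True
      have n2: "0 \<le> c p" "0 \<le> c' p'" using nn p p' by auto
      have "c p + c' p' = \<infinity>" using True n2 by auto
      thus ?thesis using p p' by (intro bexI[of _ p'] bexI[of _ p]) (auto simp: fosd_def add.commute)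
    next
      case False
      hence fp: "c p \<noteq> \<infinity>" "c' p' \<noteq> \<infinity>" by auto
      show ?thesis
      proof (rule ccontr)
        assume neg: "\<not> ?thesis"
        have noF: "\<forall>q\<in>simplexS. \<forall>q'\<in>simplexS. fosd p q' \<longrightarrow> q + q' = p + p' \<longrightarrow> c p + c' p' < c q + c' q'"
        proof (intro ballI impI)
          fix q q' assume q: "q \<in> simplexS" "q' \<in> simplexS" "fosd p q'" "q + q' = p + p'"
          have fq: "fosd q p'"
            unfolding fosd_def
          proof
            fix t :: "'s::{finite,linorder}"
            have qs: "\<And>s. q $ s = p $ s + p' $ s - q' $ s" using q(4) by (simp add: vec_eq_iff algebra_simps)
            have "(\<Sum>s\<in>{s. t \<le> s}. q $ s) = (\<Sum>s\<in>{s. t \<le> s}. p $ s) + (\<Sum>s\<in>{s. t \<le> s}. p' $ s) - (\<Sum>s\<in>{s. t \<le> s}. q' $ s)"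
              by (simp add: qs sum.distrib sum_subtractf)
            moreover have "(\<Sum>s\<in>{s. t \<le> s}. q' $ s) \<le> (\<Sum>s\<in>{s. t \<le> s}. p $ s)" using q(3) by (simp add: fosd_def)
            ultimately show "(\<Sum>s\<in>{s. t \<le> s}. p' $ s) \<le> (\<Sum>s\<in>{s. t \<le> s}. q $ s)" by linarith
          qed
          have "(1/2) *\<^sub>R p + (1/2) *\<^sub>R p' = (1/2) *\<^sub>R q + (1/2) *\<^sub>R q'" using q(4) half_eq by metis
          hence "\<not> c q + c' q' \<le> c p + c' p'" using neg q(1,2,3) fq by blast
          thus "c p + c' p' < c q + c' q'" by simp
        qed
        obtain a \<mu> \<epsilon> where D: "0 < \<epsilon>" "\<forall>t. 0 \<le> \<mu> t"
          "\<forall>q\<in>simplexS. \<forall>q'\<in>simplexS. c q \<noteq> \<infinity> \<longrightarrow> c' q' \<noteq> \<infinity> \<longrightarrow>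
           real_of_ereal (c p) + real_of_ereal (c' p') + (\<Sum>s\<in>UNIV. a s * (q $ s + q' $ s - p $ s - p' $ s))
           + (\<Sum>t\<in>UNIV. \<mu> t * Tv p q' $ t) + \<epsilon> \<le> real_of_ereal (c q) + real_of_ereal (c' q')"
          using dual_exists[OF nn cv lsc fp p p' noF] by blast
        define d where "d = (\<lambda>s. \<Sum>t\<in>{t. t \<le> s}. \<mu> t)"
        define B where "B = (\<lambda>s. a s - d s)"
        define k where "k = W c' a - W c' B"
        have dmono: "d s' \<le> d s" if "s' \<le> s" for s s'
          unfolding d_def using that D(2) by (intro sum_mono2) auto
        obtain w where w: "w \<in> contracts Prz" "\<forall>s. expu u (w s) = a s"
          using realize_vec[OF rep unb] by blast
        obtain w' where w': "w' \<in> contracts Prz" "\<forall>s. expu u (w' s) = B s + k"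
          using realize_vec[OF rep unb, of "\<lambda>s. B s + k"] by blast
        have st: "steeper R w w'"
          unfolding steeper_def
        proof (intro allI impI)
          fix s s' :: "'s::{finite,linorder}" assume ss: "s' \<le> s"
          have l1: "mix (1/2) (w s) (w' s') \<in> lotteries Prz" "mix (1/2) (w s') (w' s) \<in> lotteries Prz"
            using mix_lottery[OF contract_lot[OF w(1)] contract_lot[OF w'(1)], of "1/2"] by auto
          have m1: "expu u (mix (1/2) (w s') (w' s)) = (1/2) * a s' + (1 - 1/2) * (a s - d s + k)"
            using w(2) w'(2) by (simp add: expu_mix[OF contract_lot[OF w(1)] contract_lot[OF w'(1)]] B_def)
          have m2: "expu u (mix (1/2) (w s) (w' s')) = (1/2) * a s + (1 - 1/2) * (a s' - d s' + k)"
            using w(2) w'(2) by (simp add: expu_mix[OF contract_lot[OF w(1)] contract_lot[OF w'(1)]] B_def)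
          have "expu u (mix (1/2) (w s') (w' s)) \<le> expu u (mix (1/2) (w s) (w' s'))"
            unfolding m1 m2 using dmono[OF ss] by (simp add: field_simps)
          thus "R (const_contract (mix (1/2) (w s) (w' s'))) (const_contract (mix (1/2) (w s') (w' s)))"
            using R_const_iff[OF rep l1] by simp
        qed
        have cA: "(\<lambda>s. expu u' (w s)) = a"
        proof
          fix s show "expu u' (w s) = a s" using expu_cong[OF contract_lot[OF w(1)] ueq, of s] w(2) by simp
        qed
        have cB: "(\<lambda>s. expu u' (w' s)) = (\<lambda>s. B s + k)"
        proof
          fix s show "expu u' (w' s) = B s + k" using expu_cong[OF contract_lot[OF w'(1)] ueq, of s] w'(2) by simp
        qed
        have "R' w w'" using R_iff[OF rep' w(1) w'(1)] cA cB W_shift[OF ok(2), of B k] k_def by simp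
        hence "R w w'" using mo st w(1) w'(1) unfolding more_optimistic_def by blast
        hence Rww: "W c B + k \<le> W c a"
          using R_iff[OF rep w(1) w'(1)] w(2) w'(2) W_shift[OF ok(1), of B k] by simp
        define X where "X = dot B p - real_of_ereal (c p) + dot a p' - real_of_ereal (c' p') - \<epsilon>"
        have ineq: "dot a q - real_of_ereal (c q) \<le> X - (dot B q' - real_of_ereal (c' q'))"
          if q: "q \<in> simplexS" "q' \<in> simplexS" "c q \<noteq> \<infinity>" "c' q' \<noteq> \<infinity>" for q q'
        proof -
          have e1: "(\<Sum>s\<in>UNIV. a s * (q $ s + q' $ s - p $ s - p' $ s)) = dot a q + dot a q' - dot a p - dot a p'"
          proof -
            have "(\<Sum>s\<in>UNIV. a s * (q $ s + q' $ s - p $ s - p' $ s)) = dot a (q + q' - p - p')"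
              by (simp add: dot_def)
            thus ?thesis by (simp add: dot_add dot_sub)
          qed
          have e2: "(\<Sum>t\<in>UNIV. \<mu> t * Tv p q' $ t) = dot d p - dot d q'"
          proof -
            have "(\<Sum>t\<in>UNIV. \<mu> t * Tv p q' $ t) = (\<Sum>t\<in>UNIV. \<mu> t * (\<Sum>s\<in>{s. t \<le> s}. p $ s - q' $ s))"
              by (simp add: Tv_def)
            also have "\<dots> = (\<Sum>s\<in>UNIV. d s * (p $ s - q' $ s))" unfolding d_def by (rule tail_swap)
            also have "\<dots> = dot d (p - q')" by (simp add: dot_def)
            finally show ?thesis by (simp add: dot_sub)
          qed
          have e3: "dot B x = dot a x - dot d x" for x unfolding B_def by (rule dot_diff)
          show ?thesis using D(3) q e1 e2 e3[of q'] e3[of p] unfolding X_def by force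
        qed
        have step1: "W c a \<le> X - (dot B q' - real_of_ereal (c' q'))"
          if "q' \<in> simplexS" "c' q' \<noteq> \<infinity>" for q'
          by (rule W_le'[OF ok(1)]) (use ineq that in blast)
        have "W c' B \<le> X - W c a"
        proof (rule W_le'[OF ok(2)])
          fix q' assume "q' \<in> simplexS" "c' q' \<noteq> \<infinity>"
          thus "dot B q' - real_of_ereal (c' q') \<le> X - W c a" using step1 by force
        qed
        moreover have "dot B p - real_of_ereal (c p) \<le> W c B" by (rule W_ge'[OF ok(1) p fp(1)])
        moreover have "dot a p' - real_of_ereal (c' p') \<le> W c' a" by (rule W_ge'[OF ok(2) p' fp(2)])
        ultimately show False using Rww D(1) unfolding X_def k_def by linarith
      qed
    qed
  qed
  show ?thesis using ueq ups by blast
qed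


theorem proposition4:
  fixes Prz :: "real set" and pi0 pi1 :: real
    and R R' :: "('s::{finite,linorder}) contract \<Rightarrow> 's contract \<Rightarrow> bool"
    and c c' :: "(real^('s::{finite,linorder})) \<Rightarrow> ereal" and u u' :: "real \<Rightarrow> real"
  assumes "convex Prz" and "pi0 \<in> Prz" and "pi1 \<in> Prz" and "pi0 < pi1"
    and "unbounded_pref Prz R" and "unbounded_pref Prz R'"
    and "parsimonious_rep Prz pi0 pi1 R c u"
    and "parsimonious_rep Prz pi0 pi1 R' c' u'"
  shows "more_optimistic Prz R R' \<longleftrightarrow> ((\<forall>x\<in>Prz. u x = u' x) \<and> up_shifted c c')"
proof
  assume "more_optimistic Prz R R'"
  thus "(\<forall>x\<in>Prz. u x = u' x) \<and> up_shifted c c'"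
    using onlyif_dir[OF assms(7) assms(8) assms(5) assms(2) assms(3) assms(4)] by blast
next
  assume "(\<forall>x\<in>Prz. u x = u' x) \<and> up_shifted c c'"
  thus "more_optimistic Prz R R'"
    using if_dir[OF assms(7) assms(8)] by blast
qed

end
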